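(* Let $X=(X^{(1)},\dots,X^{(p)})\in\mathbb{R}^p$ be a random vector with finite second moments, mean $\mu_X$ and covariance matrix $\Sigma_X$, and let $\epsilon\in\mathbb{R}$ be a random variable with $E(\epsilon)=0$, $\mathrm{var}(\epsilon)=\sigma^2>0$, uncorrelated with $X^{(1)},\dots,X^{(p)}$. Let $Y=\delta+\sum_{j=1}^p\beta_jX^{(j)}+\epsilon$ for some $\delta\in\mathbb{R}$ and $\beta\in\mathbb{R}^p$, and let $\mathcal{A}=\{j:\beta_j\neq 0\}$ with $\mathrm{peff}=|\mathcal{A}|$. Assume (C1) $\Sigma_X$ is strictly positive definite, and (C2) the non-zero coefficients $\{\beta_j; j\in\mathcal{A}\}$ are a realization of a random vector whose distribution on $\mathbb{R}^{\mathrm{peff}}$ has a density $f$ with respect to Lebesgue measure (after realization they are held fixed in the model). Then the distribution of $(X,Y)$ is partially faithful almost surely with respect to the distribution generating the non-zero regression coefficients.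
   Context: For random variables $Z^{(1)},Z^{(2)}$ and a collection $W$ of random variables, $\rho(Z^{(1)},Z^{(2)}\mid W)$ denotes the population partial correlation. For $\mathcal{S}\subseteq\{1,\dots,p\}$, $X^{(\mathcal{S})}=\{X^{(j)};j\in\mathcal{S}\}$ and $\{j\}^C=\{1,\dots,p\}\setminus\{j\}$. The distribution of $(X,Y)$ is called partially faithful if for every $j\in\{1,\dots,p\}$: if $\rho(Y,X^{(j)}\mid X^{(\mathcal{S})})=0$ for some $\mathcal{S}\subseteq\{j\}^C$, then $\rho(Y,X^{(j)}\mid X^{(\{j\}^C)})=0$. *)

theory Defs
  imports "HOL-Probability.Probability"
begin

definition pcov :: "'a measure \<Rightarrow> ('a \<Rightarrow> real) \<Rightarrow> ('a \<Rightarrow> real) \<Rightarrow> real" where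
  "pcov M U V = (\<integral>\<omega>. (U \<omega> - (\<integral>\<eta>. U \<eta> \<partial>M)) * (V \<omega> - (\<integral>\<eta>. V \<eta> \<partial>M)) \<partial>M)"

definition lin_comb :: "real \<Rightarrow> (nat \<Rightarrow> real) \<Rightarrow> nat set \<Rightarrow> (nat \<Rightarrow> 'a \<Rightarrow> real) \<Rightarrow> 'a \<Rightarrow> real" where
  "lin_comb c0 c S W \<omega> = c0 + (\<Sum>k\<in>S. c k * W k \<omega>)"

definition lin_mse :: "'a measure \<Rightarrow> ('a \<Rightarrow> real) \<Rightarrow> nat set \<Rightarrow> (nat \<Rightarrow> 'a \<Rightarrow> real) \<Rightarrow> real \<Rightarrow> (nat \<Rightarrow> real) \<Rightarrow> real" where
  "lin_mse M Z S W c0 c = (\<integral>\<omega>. (Z \<omega> - lin_comb c0 c S W \<omega>)\<^sup>2 \<partial>M)"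

definition lin_resid :: "'a measure \<Rightarrow> ('a \<Rightarrow> real) \<Rightarrow> nat set \<Rightarrow> (nat \<Rightarrow> 'a \<Rightarrow> real) \<Rightarrow> 'a \<Rightarrow> real" where
  "lin_resid M Z S W =
     (let cc = (SOME cc. \<forall>d0 d. lin_mse M Z S W (fst cc) (snd cc) \<le> lin_mse M Z S W d0 d)
      in (\<lambda>\<omega>. Z \<omega> - lin_comb (fst cc) (snd cc) S W \<omega>))"

definition pcor :: "'a measure \<Rightarrow> ('a \<Rightarrow> real) \<Rightarrow> ('a \<Rightarrow> real) \<Rightarrow> nat set \<Rightarrow> (nat \<Rightarrow> 'a \<Rightarrow> real) \<Rightarrow> real" where
  "pcor M Z1 Z2 S W =
     (let r1 = lin_resid M Z1 S W; r2 = lin_resid M Z2 S W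
      in pcov M r1 r2 / sqrt (pcov M r1 r1 * pcov M r2 r2))"

definition partially_faithful :: "'a measure \<Rightarrow> nat \<Rightarrow> (nat \<Rightarrow> 'a \<Rightarrow> real) \<Rightarrow> ('a \<Rightarrow> real) \<Rightarrow> bool" where
  "partially_faithful M p X Y \<longleftrightarrow>
     (\<forall>j\<in>{1..p}. (\<exists>S\<subseteq>{1..p} - {j}. pcor M Y (X j) S X = 0) \<longrightarrow> pcor M Y (X j) ({1..p} - {j}) X = 0)"

end

theory Submission
  imports Defs
begin


definition sq :: "'a measure \<Rightarrow> ('a \<Rightarrow> real) \<Rightarrow> bool" where
  "sq M Z \<longleftrightarrow> Z \<in> borel_measurable M \<and> integrable M (\<lambda>\<omega>. (Z \<omega>)\<^sup>2)"

context prob_space begin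

lemma sq_meas: "sq M Z \<Longrightarrow> Z \<in> borel_measurable M" by (simp add: sq_def)

lemma sq_int: "sq M Z \<Longrightarrow> integrable M Z"
  unfolding sq_def by (auto intro: square_integrable_imp_integrable)

lemma sq_mult_int:
  assumes "sq M U" "sq M V" shows "integrable M (\<lambda>\<omega>. U \<omega> * V \<omega>)"
proof (rule Bochner_Integration.integrable_bound[of _ "\<lambda>\<omega>. (U \<omega>)\<^sup>2 + (V \<omega>)\<^sup>2"])
  show "integrable M (\<lambda>\<omega>. (U \<omega>)\<^sup>2 + (V \<omega>)\<^sup>2)" using assms by (auto simp: sq_def)
  show "(\<lambda>\<omega>. U \<omega> * V \<omega>) \<in> borel_measurable M" using assms by (auto simp: sq_def)
  show "AE \<omega> in M. norm (U \<omega> * V \<omega>) \<le> norm ((U \<omega>)\<^sup>2 + (V \<omega>)\<^sup>2)"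
  proof (intro AE_I2)
    fix w
    have "\<bar>U w * V w\<bar> \<le> (U w)\<^sup>2 + (V w)\<^sup>2"
    proof -
      have h1: "0 \<le> (\<bar>U w\<bar> - \<bar>V w\<bar>)\<^sup>2" by simp
      have h2: "(\<bar>U w\<bar> - \<bar>V w\<bar>)\<^sup>2 = \<bar>U w\<bar>\<^sup>2 - 2 * (\<bar>U w\<bar> * \<bar>V w\<bar>) + \<bar>V w\<bar>\<^sup>2"
        by (simp add: power2_diff)
      have h3: "0 \<le> \<bar>U w\<bar> * \<bar>V w\<bar>" by simp
      have h4: "\<bar>U w * V w\<bar> = \<bar>U w\<bar> * \<bar>V w\<bar>" by (rule abs_mult)
      have h5: "\<bar>U w\<bar>\<^sup>2 = (U w)\<^sup>2" "\<bar>V w\<bar>\<^sup>2 = (V w)\<^sup>2" by simp_all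
      show ?thesis using h1 h2 h3 h4 h5 by linarith
    qed
    thus "norm (U w * V w) \<le> norm ((U w)\<^sup>2 + (V w)\<^sup>2)" by simp
  qed
qed

lemma sq_add: assumes "sq M U" "sq M V" shows "sq M (\<lambda>\<omega>. U \<omega> + V \<omega>)"
proof -
  have "integrable M (\<lambda>\<omega>. (U \<omega>)\<^sup>2 + 2 * (U \<omega> * V \<omega>) + (V \<omega>)\<^sup>2)"
    using assms sq_mult_int[OF assms] by (auto simp: sq_def)
  moreover have "(\<lambda>\<omega>. (U \<omega> + V \<omega>)\<^sup>2) = (\<lambda>\<omega>. (U \<omega>)\<^sup>2 + 2 * (U \<omega> * V \<omega>) + (V \<omega>)\<^sup>2)"
    by (auto simp: power2_eq_square algebra_simps)
  ultimately show ?thesis using assms by (auto simp: sq_def)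
qed

lemma sq_cmult: assumes "sq M U" shows "sq M (\<lambda>\<omega>. c * U \<omega>)"
proof -
  have "(\<lambda>\<omega>. (c * U \<omega>)\<^sup>2) = (\<lambda>\<omega>. c\<^sup>2 * (U \<omega>)\<^sup>2)" by (auto simp: power_mult_distrib)
  thus ?thesis using assms by (auto simp: sq_def)
qed

lemma sq_const: "sq M (\<lambda>\<omega>. c)" by (simp add: sq_def)

lemma sq_minus: assumes "sq M U" "sq M V" shows "sq M (\<lambda>\<omega>. U \<omega> - V \<omega>)"
  using sq_add[OF assms(1) sq_cmult[OF assms(2), of "-1"]] by simp

lemma sq_sum: "finite T \<Longrightarrow> (\<And>i. i \<in> T \<Longrightarrow> sq M (U i)) \<Longrightarrow> sq M (\<lambda>\<omega>. \<Sum>i\<in>T. U i \<omega>)"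
proof (induction T rule: finite_induct)
  case empty thus ?case using sq_const[of 0] by simp
next
  case (insert x F) thus ?case using sq_add[of "U x" "\<lambda>\<omega>. \<Sum>i\<in>F. U i \<omega>"] by simp
qed

lemma sq_lin_comb:
  assumes "finite S" "\<And>k. k \<in> S \<Longrightarrow> sq M (W k)"
  shows "sq M (lin_comb c0 c S W)"
proof -
  have "sq M (\<lambda>\<omega>. c0 + (\<Sum>k\<in>S. c k * W k \<omega>))"
    using assms by (intro sq_add sq_const sq_sum sq_cmult) auto
  thus ?thesis by (simp add: lin_comb_def[abs_def])
qed

lemma pcov_eq: assumes "sq M U" "sq M V"
  shows "pcov M U V = (\<integral>\<omega>. U \<omega> * V \<omega> \<partial>M) - (\<integral>\<omega>. U \<omega> \<partial>M) * (\<integral>\<omega>. V \<omega> \<partial>M)"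
proof -
  let ?a = "\<integral>\<omega>. U \<omega> \<partial>M" and ?b = "\<integral>\<omega>. V \<omega> \<partial>M"
  have iU: "integrable M U" and iV: "integrable M V" using assms sq_int by auto
  have iUV: "integrable M (\<lambda>\<omega>. U \<omega> * V \<omega>)" using sq_mult_int[OF assms] .
  have "(\<lambda>\<omega>. (U \<omega> - ?a) * (V \<omega> - ?b)) = (\<lambda>\<omega>. (U \<omega> * V \<omega> - ?b * U \<omega>) - (?a * V \<omega> - ?a * ?b))"
    by (auto simp: algebra_simps)
  hence "pcov M U V = (\<integral>\<omega>. (U \<omega> * V \<omega> - ?b * U \<omega>) - (?a * V \<omega> - ?a * ?b) \<partial>M)"
    by (simp add: pcov_def)
  also have "\<dots> = ((\<integral>\<omega>. U \<omega> * V \<omega> \<partial>M) - ?b * ?a) - (?a * ?b - ?a * ?b)"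
    using iU iV iUV by (simp add: Bochner_Integration.integral_diff prob_space)
  finally show ?thesis by simp
qed

lemma pcov_mean0: assumes "sq M U" "sq M V" "(\<integral>\<omega>. U \<omega> \<partial>M) = 0"
  shows "pcov M U V = (\<integral>\<omega>. U \<omega> * V \<omega> \<partial>M)"
  using pcov_eq[OF assms(1,2)] assms(3) by simp

lemma pcov_sym: "pcov M U V = pcov M V U"
  by (simp add: pcov_def mult.commute)

lemma pcov_self_nonneg: "pcov M U U \<ge> 0"
  unfolding pcov_def by (rule integral_nonneg_AE) auto

lemma pcov_cong_AE:
  assumes "AE \<omega> in M. U \<omega> = U' \<omega>" "U \<in> borel_measurable M" "U' \<in> borel_measurable M"
    "V \<in> borel_measurable M"
  shows "pcov M U V = pcov M U' V"
proof -
  have e: "(\<integral>\<omega>. U \<omega> \<partial>M) = (\<integral>\<omega>. U' \<omega> \<partial>M)" using assms by (intro integral_cong_AE) auto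
  show ?thesis unfolding pcov_def e using assms by (intro integral_cong_AE) auto
qed

lemma pcov_lin:
  assumes T: "finite T" and U: "\<And>i. i \<in> T \<Longrightarrow> sq M (U i)"
  shows "pcov M (\<lambda>\<omega>. c0 + (\<Sum>i\<in>T. c i * U i \<omega>)) (\<lambda>\<omega>. d0 + (\<Sum>l\<in>T. d l * U l \<omega>))
       = (\<Sum>i\<in>T. \<Sum>l\<in>T. c i * d l * pcov M (U i) (U l))"
proof -
  define m where "m i = (\<integral>\<omega>. U i \<omega> \<partial>M)" for i
  define F where "F i \<omega> = U i \<omega> - m i" for i \<omega>
  have sqF: "sq M (F i)" if "i \<in> T" for i unfolding F_def[abs_def] using U[OF that] by (intro sq_minus sq_const)
  have E1: "(\<integral>\<omega>. c0 + (\<Sum>i\<in>T. c i * U i \<omega>) \<partial>M) = c0 + (\<Sum>i\<in>T. c i * m i)" for c0 c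
  proof -
    have "(\<integral>\<omega>. c0 + (\<Sum>i\<in>T. c i * U i \<omega>) \<partial>M) = c0 + (\<integral>\<omega>. (\<Sum>i\<in>T. c i * U i \<omega>) \<partial>M)"
      using T U sq_int by (subst Bochner_Integration.integral_add) (auto simp: prob_space)
    also have "\<dots> = c0 + (\<Sum>i\<in>T. c i * m i)"
    proof -
      have "(\<integral>\<omega>. (\<Sum>i\<in>T. c i * U i \<omega>) \<partial>M) = (\<Sum>i\<in>T. (\<integral>\<omega>. c i * U i \<omega> \<partial>M))"
        by (rule Bochner_Integration.integral_sum) (use U sq_int in auto)
      thus ?thesis by (simp add: m_def)
    qed
    finally show ?thesis .
  qed
  have D: "c0 + (\<Sum>i\<in>T. c i * U i \<omega>) - (c0 + (\<Sum>i\<in>T. c i * m i)) = (\<Sum>i\<in>T. c i * F i \<omega>)" for c0 c \<omega>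
    by (simp add: F_def algebra_simps sum_subtractf)
  have "pcov M (\<lambda>\<omega>. c0 + (\<Sum>i\<in>T. c i * U i \<omega>)) (\<lambda>\<omega>. d0 + (\<Sum>l\<in>T. d l * U l \<omega>))
      = (\<integral>\<omega>. (\<Sum>i\<in>T. c i * F i \<omega>) * (\<Sum>l\<in>T. d l * F l \<omega>) \<partial>M)"
    unfolding pcov_def E1 D ..
  also have "\<dots> = (\<integral>\<omega>. (\<Sum>i\<in>T. \<Sum>l\<in>T. c i * d l * (F i \<omega> * F l \<omega>)) \<partial>M)"
    by (simp add: sum_product algebra_simps)
  also have "\<dots> = (\<Sum>i\<in>T. \<Sum>l\<in>T. c i * d l * (\<integral>\<omega>. F i \<omega> * F l \<omega> \<partial>M))"
    using T sqF sq_mult_int by (simp add: Bochner_Integration.integral_sum)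
  also have "\<dots> = (\<Sum>i\<in>T. \<Sum>l\<in>T. c i * d l * pcov M (U i) (U l))"
    by (simp add: pcov_def F_def m_def)
  finally show ?thesis .
qed

end


definition orth :: "'a measure \<Rightarrow> (nat \<Rightarrow> 'a \<Rightarrow> real) \<Rightarrow> nat set \<Rightarrow> ('a \<Rightarrow> real) \<Rightarrow> bool" where
  "orth M X S R \<longleftrightarrow> (\<integral>\<omega>. R \<omega> \<partial>M) = 0 \<and> (\<forall>k\<in>S. (\<integral>\<omega>. R \<omega> * X k \<omega> \<partial>M) = 0)"

definition proj :: "'a measure \<Rightarrow> (nat \<Rightarrow> 'a \<Rightarrow> real) \<Rightarrow> nat set \<Rightarrow> ('a \<Rightarrow> real) \<Rightarrow> ('a \<Rightarrow> real) \<Rightarrow> bool" where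
  "proj M X S Z R \<longleftrightarrow> (\<exists>c0 c. R = (\<lambda>\<omega>. Z \<omega> - lin_comb c0 c S X \<omega>)) \<and> orth M X S R"

lemma resid_form: "\<exists>e0 e. lin_resid M Z S X = (\<lambda>\<omega>. Z \<omega> - lin_comb e0 e S X \<omega>)"
  unfolding lin_resid_def Let_def by blast

context prob_space begin

lemma orth_lc:
  assumes S: "finite S" and X: "\<forall>k\<in>S. sq M (X k)" and R: "sq M R" and o: "orth M X S R"
  shows "(\<integral>\<omega>. R \<omega> * lin_comb c0 c S X \<omega> \<partial>M) = 0"
proof -
  have eq: "(\<lambda>\<omega>. R \<omega> * lin_comb c0 c S X \<omega>) = (\<lambda>\<omega>. c0 * R \<omega> + (\<Sum>k\<in>S. c k * (R \<omega> * X k \<omega>)))"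
    by (auto simp: lin_comb_def algebra_simps sum_distrib_left)
  have i1: "integrable M (\<lambda>\<omega>. c0 * R \<omega>)" using R sq_int by auto
  have i2: "integrable M (\<lambda>\<omega>. (\<Sum>k\<in>S. c k * (R \<omega> * X k \<omega>)))"
    using X R sq_mult_int by auto
  have "(\<integral>\<omega>. (\<Sum>k\<in>S. c k * (R \<omega> * X k \<omega>)) \<partial>M) = (\<Sum>k\<in>S. (\<integral>\<omega>. c k * (R \<omega> * X k \<omega>) \<partial>M))"
    by (rule Bochner_Integration.integral_sum) (use X R sq_mult_int in auto)
  also have "\<dots> = 0" using o by (simp add: orth_def)
  finally show ?thesis unfolding eq using i1 i2 o by (simp add: orth_def)
qed

lemma proj_exists:
  assumes "finite S" shows "(\<forall>k\<in>S. sq M (X k)) \<Longrightarrow> sq M Z \<Longrightarrow> \<exists>R. proj M X S Z R"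
  using assms
proof (induction S arbitrary: Z rule: finite_induct)
  case empty
  define R where "R = (\<lambda>\<omega>. Z \<omega> - lin_comb (\<integral>\<omega>. Z \<omega> \<partial>M) (\<lambda>_. 0) {} X \<omega>)"
  have "(\<integral>\<omega>. R \<omega> \<partial>M) = 0" using sq_int[OF empty(2)]
    by (simp add: R_def lin_comb_def prob_space)
  hence "proj M X {} Z R" unfolding proj_def orth_def R_def by auto
  thus ?case by blast
next
  case (insert k S)
  have XS: "\<forall>i\<in>S. sq M (X i)" and Xk: "sq M (X k)" using insert.prems by auto
  obtain RZ where pZ: "proj M X S Z RZ" using insert.IH[OF XS insert.prems(2)] by blast
  obtain RX where pX: "proj M X S (X k) RX" using insert.IH[OF XS Xk] by blast
  obtain c0 c where RZ: "RZ = (\<lambda>\<omega>. Z \<omega> - lin_comb c0 c S X \<omega>)" and oZ: "orth M X S RZ"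
    using pZ unfolding proj_def by blast
  obtain d0 d where RX: "RX = (\<lambda>\<omega>. X k \<omega> - lin_comb d0 d S X \<omega>)" and oX: "orth M X S RX"
    using pX unfolding proj_def by blast
  have sZ: "sq M RZ" unfolding RZ by (intro sq_minus insert.prems sq_lin_comb) (use insert XS in auto)
  have sX: "sq M RX" unfolding RX by (intro sq_minus Xk sq_lin_comb) (use insert XS in auto)
  define t where "t = (\<integral>\<omega>. RZ \<omega> * RX \<omega> \<partial>M) / (\<integral>\<omega>. RX \<omega> * RX \<omega> \<partial>M)"
  define R where "R = (\<lambda>\<omega>. RZ \<omega> - t * RX \<omega>)"
  have sR: "sq M R" unfolding R_def by (intro sq_minus sq_cmult sZ sX)
  have Rform: "R = (\<lambda>\<omega>. Z \<omega> - lin_comb (c0 - t * d0) (\<lambda>i. if i = k then t else c i - t * d i) (insert k S) X \<omega>)"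
  proof
    fix \<omega>
    have "(\<Sum>i\<in>S. (if i = k then t else c i - t * d i) * X i \<omega>) = (\<Sum>i\<in>S. (c i - t * d i) * X i \<omega>)"
      using insert.hyps by (intro sum.cong) auto
    also have "\<dots> = (\<Sum>i\<in>S. c i * X i \<omega>) - t * (\<Sum>i\<in>S. d i * X i \<omega>)"
      by (simp add: algebra_simps sum_subtractf sum_distrib_left)
    finally show "R \<omega> = Z \<omega> - lin_comb (c0 - t * d0) (\<lambda>i. if i = k then t else c i - t * d i) (insert k S) X \<omega>"
      using insert.hyps by (simp add: R_def RZ RX lin_comb_def algebra_simps)
  qed
  have iZ: "integrable M RZ" and iX: "integrable M RX" using sZ sX sq_int by auto
  have m0: "(\<integral>\<omega>. R \<omega> \<partial>M) = 0" using oZ oX iZ iX by (simp add: R_def orth_def)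
  have mS: "(\<integral>\<omega>. R \<omega> * X i \<omega> \<partial>M) = 0" if i: "i \<in> S" for i
  proof -
    have "(\<lambda>\<omega>. R \<omega> * X i \<omega>) = (\<lambda>\<omega>. RZ \<omega> * X i \<omega> - t * (RX \<omega> * X i \<omega>))" by (auto simp: R_def algebra_simps)
    moreover have "integrable M (\<lambda>\<omega>. RZ \<omega> * X i \<omega>)" "integrable M (\<lambda>\<omega>. RX \<omega> * X i \<omega>)"
      using sZ sX XS i sq_mult_int by auto
    ultimately show ?thesis using oZ oX i by (simp add: orth_def)
  qed
  have oR: "orth M X S R" using m0 mS by (simp add: orth_def)
  have RrX: "(\<integral>\<omega>. R \<omega> * RX \<omega> \<partial>M) = 0"
  proof -
    have "(\<lambda>\<omega>. R \<omega> * RX \<omega>) = (\<lambda>\<omega>. RZ \<omega> * RX \<omega> - t * (RX \<omega> * RX \<omega>))" by (auto simp: R_def algebra_simps)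
    moreover have iZX: "integrable M (\<lambda>\<omega>. RZ \<omega> * RX \<omega>)" and iXX: "integrable M (\<lambda>\<omega>. RX \<omega> * RX \<omega>)"
      using sZ sX sq_mult_int by auto
    ultimately have e: "(\<integral>\<omega>. R \<omega> * RX \<omega> \<partial>M) = (\<integral>\<omega>. RZ \<omega> * RX \<omega> \<partial>M) - t * (\<integral>\<omega>. RX \<omega> * RX \<omega> \<partial>M)"
      by simp
    show ?thesis
    proof (cases "(\<integral>\<omega>. RX \<omega> * RX \<omega> \<partial>M) = 0")
      case True
      have "AE \<omega> in M. RX \<omega> * RX \<omega> = 0"
        using True iXX by (subst integral_nonneg_eq_0_iff_AE[symmetric]) auto
      hence "AE \<omega> in M. RZ \<omega> * RX \<omega> = 0" by eventually_elim simp
      hence "(\<integral>\<omega>. RZ \<omega> * RX \<omega> \<partial>M) = (\<integral>\<omega>. 0 \<partial>M)"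
        using iZX by (intro integral_cong_AE) auto
      thus ?thesis using e True by simp
    next
      case False thus ?thesis using e by (simp add: t_def)
    qed
  qed
  have mk: "(\<integral>\<omega>. R \<omega> * X k \<omega> \<partial>M) = 0"
  proof -
    have "(\<lambda>\<omega>. R \<omega> * X k \<omega>) = (\<lambda>\<omega>. R \<omega> * RX \<omega> + R \<omega> * lin_comb d0 d S X \<omega>)"
      by (auto simp: RX algebra_simps)
    moreover have "integrable M (\<lambda>\<omega>. R \<omega> * RX \<omega>)" using sR sX sq_mult_int by auto
    moreover have "integrable M (\<lambda>\<omega>. R \<omega> * lin_comb d0 d S X \<omega>)"
      using sR sq_lin_comb[of S X d0 d] XS insert.hyps sq_mult_int by auto
    ultimately show ?thesis using RrX orth_lc[OF insert.hyps(1) XS sR oR] by simp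
  qed
  have "proj M X (insert k S) Z R"
    unfolding proj_def orth_def using Rform m0 mS mk by blast
  thus ?case by blast
qed

lemma mse_decomp:
  assumes S: "finite S" and X: "\<forall>k\<in>S. sq M (X k)" and Z: "sq M Z"
    and R: "R = (\<lambda>\<omega>. Z \<omega> - lin_comb c0 c S X \<omega>)" and o: "orth M X S R"
  shows "lin_mse M Z S X d0 d = (\<integral>\<omega>. (R \<omega>)\<^sup>2 \<partial>M) + (\<integral>\<omega>. (lin_comb (c0 - d0) (\<lambda>i. c i - d i) S X \<omega>)\<^sup>2 \<partial>M)"
proof -
  define D where "D = lin_comb (c0 - d0) (\<lambda>i. c i - d i) S X"
  have sR: "sq M R" unfolding R by (intro sq_minus Z sq_lin_comb) (use S X in auto)
  have sD: "sq M D" unfolding D_def by (intro sq_lin_comb) (use S X in auto)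
  have e: "Z \<omega> - lin_comb d0 d S X \<omega> = R \<omega> + D \<omega>" for \<omega>
    by (simp add: R D_def lin_comb_def algebra_simps sum_subtractf)
  have "lin_mse M Z S X d0 d = (\<integral>\<omega>. (R \<omega>)\<^sup>2 + 2 * (R \<omega> * D \<omega>) + (D \<omega>)\<^sup>2 \<partial>M)"
    unfolding lin_mse_def e by (simp add: power2_eq_square algebra_simps)
  also have "\<dots> = (\<integral>\<omega>. (R \<omega>)\<^sup>2 \<partial>M) + 2 * (\<integral>\<omega>. R \<omega> * D \<omega> \<partial>M) + (\<integral>\<omega>. (D \<omega>)\<^sup>2 \<partial>M)"
    using sR sD sq_mult_int[OF sR sD] by (simp add: sq_def)
  also have "(\<integral>\<omega>. R \<omega> * D \<omega> \<partial>M) = 0" unfolding D_def by (rule orth_lc[OF S X sR o])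
  finally show ?thesis by (simp add: D_def)
qed

lemma proj_resid:
  assumes S: "finite S" and X: "\<forall>k\<in>S. sq M (X k)" and Z: "sq M Z" and p: "proj M X S Z R"
  shows "AE \<omega> in M. lin_resid M Z S X \<omega> = R \<omega>"
proof -
  obtain c0 c where R: "R = (\<lambda>\<omega>. Z \<omega> - lin_comb c0 c S X \<omega>)" and o: "orth M X S R"
    using p unfolding proj_def by blast
  note dec = mse_decomp[OF S X Z R o]
  have sqD: "sq M (lin_comb a0 a S X)" for a0 a by (intro sq_lin_comb) (use S X in auto)
  have nn: "0 \<le> (\<integral>\<omega>. (lin_comb a0 a S X \<omega>)\<^sup>2 \<partial>M)" for a0 a by simp
  have lc0: "lin_comb 0 (\<lambda>i. 0) S X = (\<lambda>\<omega>. 0)" by (auto simp: lin_comb_def)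
  have min: "lin_mse M Z S X c0 c = (\<integral>\<omega>. (R \<omega>)\<^sup>2 \<partial>M)" using dec[of c0 c] by (simp add: lc0)
  have ex: "\<exists>cc. \<forall>d0 d. lin_mse M Z S X (fst cc) (snd cc) \<le> lin_mse M Z S X d0 d"
    by (rule exI[of _ "(c0, c)"]) (use min dec nn in auto)
  define cc where "cc = (SOME cc. \<forall>d0 d. lin_mse M Z S X (fst cc) (snd cc) \<le> lin_mse M Z S X d0 d)"
  have ccp: "\<forall>d0 d. lin_mse M Z S X (fst cc) (snd cc) \<le> lin_mse M Z S X d0 d"
    unfolding cc_def by (rule someI_ex[OF ex])
  define D where "D = lin_comb (c0 - fst cc) (\<lambda>i. c i - snd cc i) S X"
  have "(\<integral>\<omega>. (D \<omega>)\<^sup>2 \<partial>M) \<le> 0" using ccp dec[of "fst cc" "snd cc"] min unfolding D_def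
    by (metis add_le_same_cancel1)
  hence "(\<integral>\<omega>. (D \<omega>)\<^sup>2 \<partial>M) = 0" by (simp add: antisym)
  hence "AE \<omega> in M. (D \<omega>)\<^sup>2 = 0"
    using sqD unfolding D_def sq_def by (subst integral_nonneg_eq_0_iff_AE[symmetric]) auto
  moreover have "lin_resid M Z S X \<omega> = R \<omega> + D \<omega>" for \<omega>
    unfolding lin_resid_def Let_def cc_def[symmetric] R D_def
    by (simp add: lin_comb_def algebra_simps sum_subtractf)
  ultimately show ?thesis by auto
qed

lemma resid_sq:
  assumes S: "finite S" and X: "\<forall>k\<in>S. sq M (X k)" and Z: "sq M Z"
  shows "sq M (lin_resid M Z S X)"
proof -
  obtain e0 e where "lin_resid M Z S X = (\<lambda>\<omega>. Z \<omega> - lin_comb e0 e S X \<omega>)" using resid_form by blast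
  thus ?thesis by (simp, intro sq_minus Z sq_lin_comb) (use S X in auto)
qed

lemma resid_proj:
  assumes S: "finite S" and X: "\<forall>k\<in>S. sq M (X k)" and Z: "sq M Z"
  shows "proj M X S Z (lin_resid M Z S X)"
proof -
  obtain R where p: "proj M X S Z R" using proj_exists[OF S X Z] by blast
  have ae: "AE \<omega> in M. lin_resid M Z S X \<omega> = R \<omega>" by (rule proj_resid[OF S X Z p])
  have sR: "sq M R" using p unfolding proj_def
    using X by (auto intro!: sq_minus Z sq_lin_comb S)
  have sL: "sq M (lin_resid M Z S X)" by (rule resid_sq[OF S X Z])
  have "(\<integral>\<omega>. lin_resid M Z S X \<omega> \<partial>M) = (\<integral>\<omega>. R \<omega> \<partial>M)"
    using ae sR sL by (intro integral_cong_AE) (auto simp: sq_def)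
  moreover have "(\<integral>\<omega>. lin_resid M Z S X \<omega> * X k \<omega> \<partial>M) = (\<integral>\<omega>. R \<omega> * X k \<omega> \<partial>M)" if "k \<in> S" for k
    using ae sR sL X that by (intro integral_cong_AE) (auto simp: sq_def)
  ultimately have "orth M X S (lin_resid M Z S X)" using p by (simp add: proj_def orth_def)
  thus ?thesis using resid_form unfolding proj_def by blast
qed

end


locale model = prob_space M for M :: "'a measure" +
  fixes p :: nat and X :: "nat \<Rightarrow> 'a \<Rightarrow> real" and eps :: "'a \<Rightarrow> real" and A :: "nat set"
  assumes Xsq: "\<And>j. j \<in> {1..p} \<Longrightarrow> sq M (X j)"
    and eps_sq: "sq M eps"
    and eps_mean: "(\<integral>\<omega>. eps \<omega> \<partial>M) = 0"
    and eps_var: "pcov M eps eps > 0"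
    and eps_uncorr: "\<And>j. j \<in> {1..p} \<Longrightarrow> pcov M eps (X j) = 0"
    and C1: "\<And>c. (\<exists>j\<in>{1..p}. c j \<noteq> 0) \<Longrightarrow>
               (\<Sum>i\<in>{1..p}. \<Sum>j\<in>{1..p}. c i * c j * pcov M (X i) (X j)) > 0"
    and A_sub: "A \<subseteq> {1..p}"
begin

definition R :: "nat set \<Rightarrow> nat \<Rightarrow> 'a \<Rightarrow> real" where
  "R S k = lin_resid M (X k) S X"

definition a :: "nat set \<Rightarrow> nat \<Rightarrow> nat \<Rightarrow> real" where
  "a S j k = pcov M (R S k) (R S j)"

lemma finA: "finite A" using A_sub finite_subset by blast

lemma eps_X: "i \<in> {1..p} \<Longrightarrow> (\<integral>\<omega>. eps \<omega> * X i \<omega> \<partial>M) = 0"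
  using pcov_eq[OF eps_sq Xsq, of i] eps_uncorr[of i] eps_mean by simp

context fixes S assumes S: "S \<subseteq> {1..p}"
begin

lemma finS: "finite S" using S finite_subset by blast
lemma XS: "\<forall>k\<in>S. sq M (X k)" using S Xsq by auto

lemma eps_orth: "orth M X S eps"
  using eps_mean eps_X S by (auto simp: orth_def)

lemma R_sq: "k \<in> {1..p} \<Longrightarrow> sq M (R S k)"
  unfolding R_def by (rule resid_sq[OF finS XS Xsq])

lemma R_proj: "k \<in> {1..p} \<Longrightarrow> proj M X S (X k) (R S k)"
  unfolding R_def by (rule resid_proj[OF finS XS Xsq])

lemma R_mean: "k \<in> {1..p} \<Longrightarrow> (\<integral>\<omega>. R S k \<omega> \<partial>M) = 0"
  using R_proj by (auto simp: proj_def orth_def)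

lemma eps_R: assumes k: "k \<in> {1..p}" shows "(\<integral>\<omega>. eps \<omega> * R S k \<omega> \<partial>M) = 0"
proof -
  obtain e0 e where Rk: "R S k = (\<lambda>\<omega>. X k \<omega> - lin_comb e0 e S X \<omega>)"
    using R_proj[OF k] unfolding proj_def by blast
  have sL: "sq M (lin_comb e0 e S X)" by (rule sq_lin_comb) (use finS XS in auto)
  have "(\<lambda>\<omega>. eps \<omega> * R S k \<omega>) = (\<lambda>\<omega>. eps \<omega> * X k \<omega> - eps \<omega> * lin_comb e0 e S X \<omega>)"
    by (auto simp: Rk algebra_simps)
  moreover have "integrable M (\<lambda>\<omega>. eps \<omega> * X k \<omega>)" using sq_mult_int eps_sq Xsq k by auto
  moreover have "integrable M (\<lambda>\<omega>. eps \<omega> * lin_comb e0 e S X \<omega>)" using sq_mult_int eps_sq sL by auto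
  ultimately show ?thesis using eps_X[OF k] orth_lc[OF finS XS eps_sq eps_orth] by simp
qed

lemma N2: assumes k: "k \<in> S" and j: "j \<in> {1..p}" shows "a S j k = 0"
proof -
  have kp: "k \<in> {1..p}" using k S by auto
  have "(\<lambda>\<omega>. 0::real) = (\<lambda>\<omega>. X k \<omega> - lin_comb 0 (\<lambda>i. if i = k then 1 else 0) S X \<omega>)"
  proof
    fix \<omega>
    have "(\<Sum>i\<in>S. (if i = k then 1 else 0) * X i \<omega>) = (\<Sum>i\<in>S. if i = k then X k \<omega> else 0)"
      by (intro sum.cong) auto
    also have "\<dots> = X k \<omega>" using k finS by simp
    finally show "0 = X k \<omega> - lin_comb 0 (\<lambda>i. if i = k then 1 else 0) S X \<omega>" by (simp add: lin_comb_def)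
  qed
  hence "\<exists>c0 c. (\<lambda>\<omega>. 0::real) = (\<lambda>\<omega>. X k \<omega> - lin_comb c0 c S X \<omega>)" by blast
  hence "proj M X S (X k) (\<lambda>\<omega>. 0)" unfolding proj_def orth_def by simp
  hence ae: "AE \<omega> in M. R S k \<omega> = 0" unfolding R_def by (rule proj_resid[OF finS XS Xsq[OF kp]])
  have "a S j k = pcov M (\<lambda>\<omega>. 0) (R S j)" unfolding a_def
    using ae R_sq[OF kp] R_sq[OF j] by (intro pcov_cong_AE) (auto simp: sq_def)
  also have "\<dots> = 0" by (simp add: pcov_def)
  finally show ?thesis .
qed

lemma N3: assumes j: "j \<in> {1..p}" "j \<notin> S" shows "a S j j > 0"
proof -
  obtain e0 e where Rj: "R S j = (\<lambda>\<omega>. X j \<omega> - lin_comb e0 e S X \<omega>)"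
    using R_proj[OF j(1)] unfolding proj_def by blast
  define g where "g i = (if i = j then 1 else if i \<in> S then - e i else 0)" for i
  have fp: "finite {1..p}" by simp
  have eq: "R S j = (\<lambda>\<omega>. (- e0) + (\<Sum>i\<in>{1..p}. g i * X i \<omega>))"
  proof
    fix \<omega>
    have "(\<Sum>i\<in>{1..p}. g i * X i \<omega>) = (\<Sum>i\<in>{1..p}. (if i = j then X j \<omega> else 0) + (if i \<in> S then - (e i * X i \<omega>) else 0))"
      using j by (intro sum.cong) (auto simp: g_def)
    also have "\<dots> = X j \<omega> + (\<Sum>i\<in>{1..p} \<inter> S. - (e i * X i \<omega>))"
      using j fp by (simp add: sum.distrib sum.inter_restrict)
    also have "{1..p} \<inter> S = S" using S by auto
    finally show "R S j \<omega> = (- e0) + (\<Sum>i\<in>{1..p}. g i * X i \<omega>)"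
      by (simp add: Rj lin_comb_def sum_negf)
  qed
  have "a S j j = (\<Sum>i\<in>{1..p}. \<Sum>l\<in>{1..p}. g i * g l * pcov M (X i) (X l))"
    unfolding a_def eq by (rule pcov_lin[OF fp Xsq])
  also have "\<dots> > 0" by (rule C1) (use j in \<open>auto simp: g_def\<close>)
  finally show ?thesis .
qed

context fixes \<delta> :: real and b :: "nat \<Rightarrow> real"
begin

definition Y where "Y = (\<lambda>\<omega>. \<delta> + (\<Sum>j\<in>A. b j * X j \<omega>) + eps \<omega>)"
definition RY where "RY = (\<lambda>\<omega>. (\<Sum>k\<in>A. b k * R S k \<omega>) + eps \<omega>)"

lemma Y_sq: "sq M Y"
  unfolding Y_def by (intro sq_add sq_const sq_sum sq_cmult eps_sq finA Xsq) (use A_sub in auto)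

lemma W_sq: "sq M (\<lambda>\<omega>. \<Sum>k\<in>A. b k * R S k \<omega>)"
  by (intro sq_sum sq_cmult finA R_sq) (use A_sub in auto)

lemma RY_sq: "sq M RY" unfolding RY_def by (intro sq_add W_sq eps_sq)

lemma RY_proj: "proj M X S Y RY"
proof -
  have "\<forall>k. \<exists>e. R S k = (\<lambda>\<omega>. X k \<omega> - lin_comb (fst e) (snd e) S X \<omega>)"
    using resid_form unfolding R_def by fastforce
  then obtain E where E: "\<And>k. R S k = (\<lambda>\<omega>. X k \<omega> - lin_comb (fst (E k)) (snd (E k)) S X \<omega>)"
    by metis
  have form: "RY = (\<lambda>\<omega>. Y \<omega> - lin_comb (\<delta> + (\<Sum>k\<in>A. b k * fst (E k))) (\<lambda>i. \<Sum>k\<in>A. b k * snd (E k) i) S X \<omega>)"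
  proof
    fix \<omega>
    have sw: "(\<Sum>k\<in>A. \<Sum>i\<in>S. b k * (snd (E k) i * X i \<omega>)) = (\<Sum>i\<in>S. \<Sum>k\<in>A. b k * (snd (E k) i * X i \<omega>))"
      by (rule sum.swap)
    have "(\<Sum>k\<in>A. b k * R S k \<omega>) = (\<Sum>k\<in>A. b k * X k \<omega>) - (\<Sum>k\<in>A. b k * fst (E k)) - (\<Sum>k\<in>A. \<Sum>i\<in>S. b k * (snd (E k) i * X i \<omega>))"
      by (simp add: E lin_comb_def algebra_simps sum.distrib sum_subtractf sum_distrib_left)
    also have "\<dots> = (\<Sum>k\<in>A. b k * X k \<omega>) - (\<Sum>k\<in>A. b k * fst (E k)) - (\<Sum>i\<in>S. (\<Sum>k\<in>A. b k * snd (E k) i) * X i \<omega>)"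
      unfolding sw by (simp add: sum_distrib_right mult.assoc)
    finally show "RY \<omega> = Y \<omega> - lin_comb (\<delta> + (\<Sum>k\<in>A. b k * fst (E k))) (\<lambda>i. \<Sum>k\<in>A. b k * snd (E k) i) S X \<omega>"
      by (simp add: RY_def Y_def lin_comb_def)
  qed
  have iR: "integrable M (R S k)" if "k \<in> A" for k using R_sq sq_int A_sub that by auto
  have m0: "(\<integral>\<omega>. RY \<omega> \<partial>M) = 0"
  proof -
    have "(\<integral>\<omega>. RY \<omega> \<partial>M) = (\<integral>\<omega>. (\<Sum>k\<in>A. b k * R S k \<omega>) \<partial>M) + (\<integral>\<omega>. eps \<omega> \<partial>M)"
      unfolding RY_def using W_sq eps_sq sq_int by (intro Bochner_Integration.integral_add) auto
    also have "(\<integral>\<omega>. (\<Sum>k\<in>A. b k * R S k \<omega>) \<partial>M) = (\<Sum>k\<in>A. (\<integral>\<omega>. b k * R S k \<omega> \<partial>M))"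
      by (rule Bochner_Integration.integral_sum) (use iR in auto)
    also have "(\<Sum>k\<in>A. (\<integral>\<omega>. b k * R S k \<omega> \<partial>M)) = 0"
    proof (intro sum.neutral ballI)
      fix k assume "k \<in> A" thus "(\<integral>\<omega>. b k * R S k \<omega> \<partial>M) = 0" using R_mean A_sub by auto
    qed
    finally show ?thesis using eps_mean by simp
  qed
  have mi: "(\<integral>\<omega>. RY \<omega> * X i \<omega> \<partial>M) = 0" if i: "i \<in> S" for i
  proof -
    have ip: "i \<in> {1..p}" using i S by auto
    have iRX: "integrable M (\<lambda>\<omega>. b k * (R S k \<omega> * X i \<omega>))" if "k \<in> A" for k
      using R_sq Xsq[OF ip] sq_mult_int A_sub that by auto
    have "(\<lambda>\<omega>. RY \<omega> * X i \<omega>) = (\<lambda>\<omega>. (\<Sum>k\<in>A. b k * (R S k \<omega> * X i \<omega>)) + eps \<omega> * X i \<omega>)"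
      by (rule ext) (simp add: RY_def distrib_right sum_distrib_right mult.assoc)
    hence "(\<integral>\<omega>. RY \<omega> * X i \<omega> \<partial>M) = (\<integral>\<omega>. (\<Sum>k\<in>A. b k * (R S k \<omega> * X i \<omega>)) \<partial>M) + (\<integral>\<omega>. eps \<omega> * X i \<omega> \<partial>M)"
      using iRX sq_mult_int[OF eps_sq Xsq[OF ip]] by (simp add: Bochner_Integration.integral_add)
    also have "(\<integral>\<omega>. (\<Sum>k\<in>A. b k * (R S k \<omega> * X i \<omega>)) \<partial>M) = (\<Sum>k\<in>A. (\<integral>\<omega>. b k * (R S k \<omega> * X i \<omega>) \<partial>M))"
      by (rule Bochner_Integration.integral_sum) (use iRX in auto)
    also have "\<dots> = 0"
    proof (intro sum.neutral ballI)
      fix k assume k: "k \<in> A"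
      have "orth M X S (R S k)" using R_proj A_sub k by (auto simp: proj_def)
      thus "(\<integral>\<omega>. b k * (R S k \<omega> * X i \<omega>) \<partial>M) = 0" using i by (simp add: orth_def)
    qed
    finally show ?thesis using eps_X[OF ip] by simp
  qed
  show ?thesis unfolding proj_def orth_def using form m0 mi by blast
qed

lemma RY_mean: "(\<integral>\<omega>. RY \<omega> \<partial>M) = 0" using RY_proj by (simp add: proj_def orth_def)

lemma resY_ae: "AE \<omega> in M. lin_resid M Y S X \<omega> = RY \<omega>"
  by (rule proj_resid[OF finS XS Y_sq RY_proj])

lemma resY_sq: "sq M (lin_resid M Y S X)" by (rule resid_sq[OF finS XS Y_sq])

lemma N1: assumes j: "j \<in> {1..p}"
  shows "pcov M (lin_resid M Y S X) (R S j) = (\<Sum>k\<in>A. b k * a S j k)"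
proof -
  have iRR: "integrable M (\<lambda>\<omega>. b k * (R S k \<omega> * R S j \<omega>))" if "k \<in> A" for k
    using R_sq R_sq[OF j] sq_mult_int A_sub that by auto
  have "pcov M (lin_resid M Y S X) (R S j) = pcov M RY (R S j)"
    using resY_ae resY_sq RY_sq R_sq[OF j] by (intro pcov_cong_AE) (auto simp: sq_def)
  also have "\<dots> = (\<integral>\<omega>. RY \<omega> * R S j \<omega> \<partial>M)" by (rule pcov_mean0[OF RY_sq R_sq[OF j] RY_mean])
  also have "(\<lambda>\<omega>. RY \<omega> * R S j \<omega>) = (\<lambda>\<omega>. (\<Sum>k\<in>A. b k * (R S k \<omega> * R S j \<omega>)) + eps \<omega> * R S j \<omega>)"
    by (rule ext) (simp add: RY_def distrib_right sum_distrib_right mult.assoc)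
  also have "(\<integral>\<omega>. (\<Sum>k\<in>A. b k * (R S k \<omega> * R S j \<omega>)) + eps \<omega> * R S j \<omega> \<partial>M)
      = (\<integral>\<omega>. (\<Sum>k\<in>A. b k * (R S k \<omega> * R S j \<omega>)) \<partial>M) + (\<integral>\<omega>. eps \<omega> * R S j \<omega> \<partial>M)"
    using iRR sq_mult_int[OF eps_sq R_sq[OF j]] by (simp add: Bochner_Integration.integral_add)
  also have "(\<integral>\<omega>. (\<Sum>k\<in>A. b k * (R S k \<omega> * R S j \<omega>)) \<partial>M) = (\<Sum>k\<in>A. (\<integral>\<omega>. b k * (R S k \<omega> * R S j \<omega>) \<partial>M))"
    by (rule Bochner_Integration.integral_sum) (use iRR in auto)
  also have "\<dots> = (\<Sum>k\<in>A. b k * a S j k)"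
  proof (intro sum.cong refl)
    fix k assume k: "k \<in> A"
    have kp: "k \<in> {1..p}" using k A_sub by auto
    show "(\<integral>\<omega>. b k * (R S k \<omega> * R S j \<omega>) \<partial>M) = b k * a S j k"
      using pcov_mean0[OF R_sq[OF kp] R_sq[OF j] R_mean[OF kp]] by (simp add: a_def)
  qed
  finally show ?thesis using eps_R[OF j] by simp
qed

lemma N4: "pcov M (lin_resid M Y S X) (lin_resid M Y S X) > 0"
proof -
  define W where "W = (\<lambda>\<omega>. \<Sum>k\<in>A. b k * R S k \<omega>)"
  have sW: "sq M W" unfolding W_def by (rule W_sq)
  have iRe: "integrable M (\<lambda>\<omega>. b k * (eps \<omega> * R S k \<omega>))" if "k \<in> A" for k
    using R_sq eps_sq sq_mult_int A_sub that by auto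
  have We: "(\<integral>\<omega>. eps \<omega> * W \<omega> \<partial>M) = 0"
  proof -
    have "(\<integral>\<omega>. eps \<omega> * W \<omega> \<partial>M) = (\<integral>\<omega>. (\<Sum>k\<in>A. b k * (eps \<omega> * R S k \<omega>)) \<partial>M)"
      by (simp add: W_def sum_distrib_left algebra_simps)
    also have "\<dots> = (\<Sum>k\<in>A. (\<integral>\<omega>. b k * (eps \<omega> * R S k \<omega>) \<partial>M))"
      by (rule Bochner_Integration.integral_sum) (use iRe in auto)
    also have "\<dots> = 0" using eps_R A_sub by (auto intro!: sum.neutral)
    finally show ?thesis .
  qed
  have "pcov M (lin_resid M Y S X) (lin_resid M Y S X) = pcov M RY (lin_resid M Y S X)"
    using resY_ae resY_sq RY_sq by (intro pcov_cong_AE) (auto simp: sq_def)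
  also have "\<dots> = pcov M (lin_resid M Y S X) RY" by (rule pcov_sym)
  also have "\<dots> = pcov M RY RY"
    using resY_ae resY_sq RY_sq by (intro pcov_cong_AE) (auto simp: sq_def)
  also have "\<dots> = (\<integral>\<omega>. RY \<omega> * RY \<omega> \<partial>M)" by (rule pcov_mean0[OF RY_sq RY_sq RY_mean])
  also have "(\<lambda>\<omega>. RY \<omega> * RY \<omega>) = (\<lambda>\<omega>. (W \<omega>)\<^sup>2 + 2 * (eps \<omega> * W \<omega>) + eps \<omega> * eps \<omega>)"
    by (auto simp: RY_def W_def power2_eq_square algebra_simps)
  also have "(\<integral>\<omega>. (W \<omega>)\<^sup>2 + 2 * (eps \<omega> * W \<omega>) + eps \<omega> * eps \<omega> \<partial>M)
     = (\<integral>\<omega>. (W \<omega>)\<^sup>2 \<partial>M) + 2 * (\<integral>\<omega>. eps \<omega> * W \<omega> \<partial>M) + (\<integral>\<omega>. eps \<omega> * eps \<omega> \<partial>M)"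
    using sW sq_mult_int[OF eps_sq sW] sq_mult_int[OF eps_sq eps_sq] by (simp add: sq_def)
  also have "(\<integral>\<omega>. eps \<omega> * eps \<omega> \<partial>M) = pcov M eps eps"
    by (rule pcov_mean0[OF eps_sq eps_sq eps_mean, symmetric])
  finally show ?thesis using We eps_var by (simp add: add_nonneg_pos)
qed

end
end

lemma pcor_eq:
  assumes S: "S \<subseteq> {1..p}" and j: "j \<in> {1..p}"
  shows "pcor M (Y \<delta> b) (X j) S X = (\<Sum>k\<in>A. b k * a S j k) /
            sqrt (pcov M (lin_resid M (Y \<delta> b) S X) (lin_resid M (Y \<delta> b) S X) * a S j j)"
  unfolding pcor_def Let_def using N1[OF S j] by (simp add: a_def R_def)

lemma bad:
  assumes "\<not> partially_faithful M p X (Y \<delta> b)"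
  shows "\<exists>j\<in>A. \<exists>S\<in>Pow ({1..p} - {j}). a S j j \<noteq> 0 \<and> (\<Sum>k\<in>A. a S j k * b k) = 0"
proof -
  obtain j S where j: "j \<in> {1..p}" and S: "S \<subseteq> {1..p} - {j}" and z: "pcor M (Y \<delta> b) (X j) S X = 0"
    and nz: "pcor M (Y \<delta> b) (X j) ({1..p} - {j}) X \<noteq> 0"
    using assms unfolding partially_faithful_def by blast
  have S': "S \<subseteq> {1..p}" "j \<notin> S" using S by auto
  have F: "{1..p} - {j} \<subseteq> {1..p}" by auto
  have "(\<Sum>k\<in>A. b k * a ({1..p} - {j}) j k) \<noteq> 0"
    using nz unfolding pcor_eq[OF F j] by auto
  then obtain k where k: "k \<in> A" "b k * a ({1..p} - {j}) j k \<noteq> 0" by (meson sum.neutral)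
  have jA: "j \<in> A"
  proof (rule ccontr)
    assume "j \<notin> A"
    hence "k \<in> {1..p} - {j}" using k A_sub by auto
    thus False using N2[OF F _ j] k by auto
  qed
  have pos3: "a S j j > 0" by (rule N3[OF S'(1) j S'(2)])
  have pos4: "pcov M (lin_resid M (Y \<delta> b) S X) (lin_resid M (Y \<delta> b) S X) > 0" by (rule N4[OF S'(1)])
  have "(\<Sum>k\<in>A. b k * a S j k) = 0" using z unfolding pcor_eq[OF S'(1) j] using pos3 pos4 by simp
  hence "(\<Sum>k\<in>A. a S j k * b k) = 0" by (simp add: mult.commute)
  moreover have "S \<in> Pow ({1..p} - {j})" using S by simp
  ultimately show ?thesis using jA pos3 by force
qed

end



interpretation lb: product_sigma_finite "\<lambda>_::nat. lborel :: real measure"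
  by standard

lemma hyper_null:
  fixes A :: "nat set" and a :: "nat \<Rightarrow> real"
  assumes fin: "finite A" and jA: "j \<in> A" and aj: "a j \<noteq> 0"
  shows "{b \<in> space (PiM A (\<lambda>_. lborel)). (\<Sum>k\<in>A. a k * b k) = 0} \<in> null_sets (PiM A (\<lambda>_. lborel))"
proof -
  let ?P = "PiM A (\<lambda>_. lborel :: real measure)"
  let ?H = "{b \<in> space ?P. (\<Sum>k\<in>A. a k * b k) = 0}"
  define I where "I = A - {j}"
  have AI: "A = insert j I" and jI: "j \<notin> I" and fI: "finite I" using jA fin by (auto simp: I_def)
  have Hm: "?H \<in> sets ?P" by measurable
  have "emeasure ?P ?H = (\<integral>\<^sup>+ b. indicator ?H b \<partial>?P)" using Hm by simp
  also have "\<dots> = (\<integral>\<^sup>+ x. (\<integral>\<^sup>+ y. indicator ?H (x(j := y)) \<partial>lborel) \<partial>(PiM I (\<lambda>_. lborel)))"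
    unfolding AI by (rule lb.product_nn_integral_insert[OF fI jI]) (use Hm AI in simp)
  also have "\<dots> = (\<integral>\<^sup>+ x. 0 \<partial>(PiM I (\<lambda>_. lborel :: real measure)))"
  proof (intro nn_integral_cong)
    fix x assume x: "x \<in> space (PiM I (\<lambda>_. lborel :: real measure))"
    define c where "c = - (\<Sum>k\<in>I. a k * x k) / a j"
    have "(\<integral>\<^sup>+ y. indicator ?H (x(j := y)) \<partial>lborel) = (\<integral>\<^sup>+ y. indicator {c} y \<partial>lborel)"
    proof (rule nn_integral_cong)
      fix y :: real
      have sp: "x(j := y) \<in> space ?P" using x AI by (auto simp: space_PiM PiE_def extensional_def)
      have "(\<Sum>k\<in>A. a k * (x(j := y)) k) = a j * y + (\<Sum>k\<in>I. a k * x k)"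
        unfolding AI using fI jI by (simp add: sum.insert) (rule sum.cong, auto)
      hence "x(j := y) \<in> ?H \<longleftrightarrow> y = c" using sp aj by (auto simp: c_def field_simps)
      thus "indicator ?H (x(j := y)) = (indicator {c} y :: ennreal)" by (simp add: indicator_def)
    qed
    also have "\<dots> = 0" by simp
    finally show "(\<integral>\<^sup>+ y. indicator ?H (x(j := y)) \<partial>lborel) = 0" .
  qed
  also have "\<dots> = 0" by simp
  finally show ?thesis using Hm by auto
qed
theorem theorem1:
  fixes M :: "'a measure" and p :: nat and X :: "nat \<Rightarrow> 'a \<Rightarrow> real" and eps :: "'a \<Rightarrow> real"
    and \<delta> :: real and A :: "nat set" and f :: "(nat \<Rightarrow> real) \<Rightarrow> ennreal"
  assumes "prob_space M"
    and X_meas: "\<And>j. j \<in> {1..p} \<Longrightarrow> X j \<in> borel_measurable M"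
    and X_sq: "\<And>j. j \<in> {1..p} \<Longrightarrow> integrable M (\<lambda>\<omega>. (X j \<omega>)\<^sup>2)"
    and eps_meas: "eps \<in> borel_measurable M"
    and eps_sq: "integrable M (\<lambda>\<omega>. (eps \<omega>)\<^sup>2)"
    and eps_mean: "(\<integral>\<omega>. eps \<omega> \<partial>M) = 0"
    and eps_var: "pcov M eps eps > 0"
    and eps_uncorr: "\<And>j. j \<in> {1..p} \<Longrightarrow> pcov M eps (X j) = 0"
    and C1: "\<And>c. (\<exists>j\<in>{1..p}. c j \<noteq> 0) \<Longrightarrow>
               (\<Sum>i\<in>{1..p}. \<Sum>j\<in>{1..p}. c i * c j * pcov M (X i) (X j)) > 0"
    and A_sub: "A \<subseteq> {1..p}"
    and C2_meas: "f \<in> borel_measurable (PiM A (\<lambda>_. lborel))"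
    and C2_prob: "prob_space (density (PiM A (\<lambda>_. lborel)) f)"
  shows "AE b in density (PiM A (\<lambda>_. lborel)) f.
           (\<forall>j\<in>A. b j \<noteq> 0) \<longrightarrow>
           partially_faithful M p X (\<lambda>\<omega>. \<delta> + (\<Sum>j\<in>A. b j * X j \<omega>) + eps \<omega>)"
proof -
  have Xsq: "\<And>j. j \<in> {1..p} \<Longrightarrow> sq M (X j)" using X_meas X_sq by (simp add: sq_def)
  have esq: "sq M eps" using eps_meas eps_sq by (simp add: sq_def)
  interpret model M p X eps A
    by (rule model.intro[OF assms(1) model_axioms.intro[OF Xsq esq eps_mean eps_var eps_uncorr C1 A_sub]])
  let ?P = "PiM A (\<lambda>_. lborel :: real measure)"
  define H where "H j S = (if a S j j \<noteq> 0 then {b \<in> space ?P. (\<Sum>k\<in>A. a S j k * b k) = 0} else {})" for j S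
  define N where "N = (\<Union>j\<in>A. \<Union>S\<in>Pow ({1..p} - {j}). H j S)"
  have fA: "finite A" using A_sub finite_subset by blast
  have Hn: "H j S \<in> null_sets ?P" if j: "j \<in> A" for j S
    unfolding H_def using hyper_null[OF fA j, of "a S j"] by auto
  have inner: "(\<Union>S\<in>Pow ({1..p} - {j}). H j S) \<in> null_sets ?P" if j: "j \<in> A" for j
    by (rule null_sets_UN'[OF countable_finite]) (use Hn[OF j] in auto)
  have "N \<in> null_sets ?P"
    unfolding N_def by (rule null_sets_UN'[OF countable_finite[OF fA] inner])
  moreover have "{b \<in> space ?P. \<not> ((\<forall>j\<in>A. b j \<noteq> 0) \<longrightarrow> partially_faithful M p X (\<lambda>\<omega>. \<delta> + (\<Sum>j\<in>A. b j * X j \<omega>) + eps \<omega>))} \<subseteq> N"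
  proof
    fix b assume b: "b \<in> {b \<in> space ?P. \<not> ((\<forall>j\<in>A. b j \<noteq> 0) \<longrightarrow> partially_faithful M p X (\<lambda>\<omega>. \<delta> + (\<Sum>j\<in>A. b j * X j \<omega>) + eps \<omega>))}"
    hence "\<not> partially_faithful M p X (Y \<delta> b)" using Y_def[where S="{}"] by simp
    hence "\<exists>j\<in>A. \<exists>S\<in>Pow ({1..p} - {j}). a S j j \<noteq> 0 \<and> (\<Sum>k\<in>A. a S j k * b k) = 0"
      by (rule bad)
    then obtain j S where jS: "j \<in> A" "S \<in> Pow ({1..p} - {j})" "a S j j \<noteq> 0" "(\<Sum>k\<in>A. a S j k * b k) = 0"
      by blast
    have "b \<in> H j S" unfolding H_def using jS(3,4) b by simp
    thus "b \<in> N" unfolding N_def using jS(1,2) by (intro UN_I)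
  qed
  ultimately have "AE b in ?P. (\<forall>j\<in>A. b j \<noteq> 0) \<longrightarrow> partially_faithful M p X (\<lambda>\<omega>. \<delta> + (\<Sum>j\<in>A. b j * X j \<omega>) + eps \<omega>)"
    by (rule AE_I')
  thus ?thesis unfolding AE_density[OF C2_meas] by (rule eventually_mono) simp
qed


end
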